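(* Problem (S) has at most one weak solution belonging to $C^1[0,1]$.
   Context: Fix $\epsilon>0$, $\Omega_A>0$, $\Omega_D>0$, $\alpha,\beta\in\mathbb{R}$. Problem (S): $\tfrac{\epsilon}{2}\rho''+(2\rho-1)\rho'+\Omega_A(1-\rho)-\Omega_D\rho=0$ on $(0,1)$, $\rho(0)=\alpha$, $\rho(1)=1-\beta$. A weak solution of (S) is a function $\rho\in W^{1,2}(0,1)$ with $\rho(0)=\alpha$, $\rho(1)=1-\beta$ and $\int_0^1\big[\tfrac{\epsilon}{2}\rho'\varphi'-\big((2\rho-1)\rho'+\Omega_A(1-\rho)-\Omega_D\rho\big)\varphi\big]dx=0$ for all $\varphi\in W^{1,2}_0(0,1)$. *)

theory Defs
  imports "HOL-Analysis.Analysis"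
begin

definition L2_01 :: "(real \<Rightarrow> real) \<Rightarrow> bool" where
  "L2_01 f \<longleftrightarrow> set_borel_measurable lborel {0<..<1} f \<and>
                 set_integrable lborel {0<..<1} (\<lambda>x. (f x)^2)"

definition test_fun :: "(real \<Rightarrow> real) \<Rightarrow> bool" where
  "test_fun \<psi> \<longleftrightarrow>
     (\<exists>D :: nat \<Rightarrow> real \<Rightarrow> real. D 0 = \<psi> \<and>
        (\<forall>k x. (D k has_real_derivative D (Suc k) x) (at x))) \<and>
     (\<exists>a b. 0 < a \<and> a \<le> b \<and> b < 1 \<and> (\<forall>x. x \<notin> {a..b} \<longrightarrow> \<psi> x = 0))"

definition W12_deriv :: "(real \<Rightarrow> real) \<Rightarrow> (real \<Rightarrow> real) \<Rightarrow> bool" where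
  "W12_deriv f g \<longleftrightarrow> L2_01 f \<and> L2_01 g \<and>
     (\<forall>\<psi>. test_fun \<psi> \<longrightarrow>
        (LINT x:{0<..<1}|lborel. f x * deriv \<psi> x) = - (LINT x:{0<..<1}|lborel. g x * \<psi> x))"

definition W12_0_deriv :: "(real \<Rightarrow> real) \<Rightarrow> (real \<Rightarrow> real) \<Rightarrow> bool" where
  "W12_0_deriv \<phi> h \<longleftrightarrow> W12_deriv \<phi> h \<and>
     (\<exists>\<psi>s :: nat \<Rightarrow> real \<Rightarrow> real. (\<forall>n. test_fun (\<psi>s n)) \<and>
        (\<lambda>n. LINT x:{0<..<1}|lborel. (\<psi>s n x - \<phi> x)^2 + (deriv (\<psi>s n) x - h x)^2)
          \<longlonglongrightarrow> 0)"

text \<open>Weak solution of problem (S). W^{1,2}(0,1) functions are identified with their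
  continuous representative on [0,1], so boundary values are point values.\<close>
definition weak_solution_S ::
  "real \<Rightarrow> real \<Rightarrow> real \<Rightarrow> real \<Rightarrow> real \<Rightarrow> (real \<Rightarrow> real) \<Rightarrow> bool" where
  "weak_solution_S \<epsilon> \<Omega>A \<Omega>D \<alpha> \<beta> \<rho> \<longleftrightarrow>
     continuous_on {0..1} \<rho> \<and> \<rho> 0 = \<alpha> \<and> \<rho> 1 = 1 - \<beta> \<and>
     (\<exists>g. W12_deriv \<rho> g \<and>
        (\<forall>\<phi> h. W12_0_deriv \<phi> h \<longrightarrow>
           (LINT x:{0<..<1}|lborel.
              \<epsilon> / 2 * g x * h x
              - ((2 * \<rho> x - 1) * g x + \<Omega>A * (1 - \<rho> x) - \<Omega>D * \<rho> x) * \<phi> x) = 0))"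

definition C1_01 :: "(real \<Rightarrow> real) \<Rightarrow> bool" where
  "C1_01 f \<longleftrightarrow> (\<exists>D. continuous_on {0..1} D \<and>
       (\<forall>x\<in>{0..1}. (f has_real_derivative D x) (at x within {0..1})))"

end

theory Submission
  imports Defs "HOL-Computational_Algebra.Polynomial"
begin


definition smooth :: "(real \<Rightarrow> real) \<Rightarrow> bool" where
  "smooth f \<longleftrightarrow> (\<exists>D. D 0 = f \<and> (\<forall>k x. (D k has_real_derivative D (Suc k) x) (at x)))"

lemma leibniz_step:
  fixes A B :: "nat \<Rightarrow> real \<Rightarrow> real"
  assumes A: "\<And>k x. (A k has_real_derivative A (Suc k) x) (at x)"
    and B: "\<And>k x. (B k has_real_derivative B (Suc k) x) (at x)"
  shows "((\<lambda>x. \<Sum>i = 0..n. of_nat (n choose i) * A i x * B (n-i) x) has_real_derivative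
          (\<Sum>i = 0..Suc n. of_nat (Suc n choose i) * A i x * B (Suc n - i) x)) (at x)"
proof -
  have d: "((\<lambda>x. \<Sum>i = 0..n. of_nat (n choose i) * A i x * B (n-i) x) has_real_derivative
          (\<Sum>i = 0..n. of_nat (n choose i) * A (Suc i) x * B (n-i) x + of_nat (n choose i) * A i x * B (Suc (n-i)) x)) (at x)"
    by (rule DERIV_sum) (auto intro!: derivative_eq_intros A B simp: algebra_simps)
  define h where "h i = of_nat (n choose i) * A i x * B (Suc n - i) x" for i
  have h1: "(\<Sum>i = 0..n. h i) = (\<Sum>i = 0..Suc n. h i)" by (simp add: h_def)
  also have "\<dots> = h 0 + (\<Sum>i = 0..n. h (Suc i))" by (subst sum.atLeast0_atMost_Suc_shift) (simp add: o_def)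
  finally have h2: "(\<Sum>i = 0..n. h i) = h 0 + (\<Sum>i = 0..n. h (Suc i))" .
  have "(\<Sum>i = 0..Suc n. of_nat (Suc n choose i) * A i x * B (Suc n - i) x)
     = A 0 x * B (Suc n) x + (\<Sum>i = 0..n. of_nat (Suc n choose Suc i) * A (Suc i) x * B (n - i) x)"
    by (subst sum.atLeast0_atMost_Suc_shift) (simp add: o_def)
  also have "\<dots> = A 0 x * B (Suc n) x + (\<Sum>i = 0..n. of_nat (n choose i) * A (Suc i) x * B (n - i) x + h (Suc i))"
    by (intro arg_cong2[where f="(+)"] refl sum.cong) (auto simp: h_def algebra_simps)
  also have "\<dots> = (\<Sum>i = 0..n. of_nat (n choose i) * A (Suc i) x * B (n-i) x) + (\<Sum>i = 0..n. h i)"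
    unfolding h2 sum.distrib by (simp add: h_def[of 0])
  also have "\<dots> = (\<Sum>i = 0..n. of_nat (n choose i) * A (Suc i) x * B (n-i) x + of_nat (n choose i) * A i x * B (Suc (n-i)) x)"
    by (simp add: sum.distrib h_def Suc_diff_le)
  finally show ?thesis using d by simp
qed

lemma smooth_mult:
  assumes "smooth f" "smooth g" shows "smooth (\<lambda>x. f x * g x)"
proof -
  obtain A where A: "A 0 = f" "\<And>k x. (A k has_real_derivative A (Suc k) x) (at x)"
    using assms(1) unfolding smooth_def by blast
  obtain B where B: "B 0 = g" "\<And>k x. (B k has_real_derivative B (Suc k) x) (at x)"
    using assms(2) unfolding smooth_def by blast
  show ?thesis unfolding smooth_def
    by (rule exI[of _ "\<lambda>n x. \<Sum>i = 0..n. of_nat (n choose i) * A i x * B (n-i) x"])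
       (use A B leibniz_step[of A B] in auto)
qed

lemma smooth_add:
  assumes "smooth f" "smooth g" shows "smooth (\<lambda>x. f x + g x)"
proof -
  obtain A where A: "A 0 = f" "\<And>k x. (A k has_real_derivative A (Suc k) x) (at x)"
    using assms(1) unfolding smooth_def by blast
  obtain B where B: "B 0 = g" "\<And>k x. (B k has_real_derivative B (Suc k) x) (at x)"
    using assms(2) unfolding smooth_def by blast
  show ?thesis unfolding smooth_def
    by (rule exI[of _ "\<lambda>n x. A n x + B n x"]) (use A B in \<open>auto intro!: derivative_eq_intros\<close>)
qed

lemma smooth_cmult:
  assumes "smooth f" shows "smooth (\<lambda>x. c * f x)"
proof -
  obtain A where A: "A 0 = f" "\<And>k x. (A k has_real_derivative A (Suc k) x) (at x)"
    using assms(1) unfolding smooth_def by blast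
  show ?thesis unfolding smooth_def
    by (rule exI[of _ "\<lambda>n x. c * A n x"]) (use A in \<open>auto intro!: derivative_eq_intros\<close>)
qed

lemma smooth_diff:
  assumes "smooth f" "smooth g" shows "smooth (\<lambda>x. f x - g x)"
  using smooth_add[OF assms(1) smooth_cmult[OF assms(2), of "-1"]] by simp

lemma smooth_affine:
  assumes "smooth f" shows "smooth (\<lambda>x. f (c * x + d))"
proof -
  obtain A where A: "A 0 = f" "\<And>k x. (A k has_real_derivative A (Suc k) x) (at x)"
    using assms(1) unfolding smooth_def by blast
  have "((\<lambda>x. c ^ k * A k (c * x + d)) has_real_derivative c ^ Suc k * A (Suc k) (c * x + d)) (at x)" for k x
    by (auto intro!: derivative_eq_intros DERIV_chain2[OF A(2)] simp: algebra_simps)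
  then show ?thesis unfolding smooth_def
    by (intro exI[of _ "\<lambda>n x. c ^ n * A n (c * x + d)"]) (use A in auto)
qed

lemma smooth_deriv:
  assumes "smooth f"
  obtains f' where "\<And>x. (f has_real_derivative f' x) (at x)" "smooth f'"
proof -
  obtain A where A: "A 0 = f" "\<And>k x. (A k has_real_derivative A (Suc k) x) (at x)"
    using assms(1) unfolding smooth_def by blast
  show ?thesis
    apply (rule that[of "A 1"])
    using A apply force
    unfolding smooth_def using A by (intro exI[of _ "\<lambda>n. A (Suc n)"]) auto
qed




lemma lim_poly_exp: "((\<lambda>t. poly (p::real poly) t * exp (-t)) \<longlongrightarrow> 0) at_top"
proof -
  have "((\<lambda>t. \<Sum>i\<le>degree p. coeff p i * (t ^ i / exp t)) \<longlongrightarrow> (\<Sum>i\<le>degree p. coeff p i * 0)) at_top"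
    by (intro tendsto_sum tendsto_mult tendsto_const tendsto_power_div_exp_0)
  moreover have "poly p t * exp (-t) = (\<Sum>i\<le>degree p. coeff p i * (t ^ i / exp t))" for t
    by (simp add: poly_altdef sum_distrib_right exp_minus divide_inverse mult.assoc)
  ultimately show ?thesis by simp
qed

fun PE :: "nat \<Rightarrow> real poly" where
  "PE 0 = 1"
| "PE (Suc k) = pCons 0 (pCons 0 (PE k - pderiv (PE k)))"

definition DE :: "nat \<Rightarrow> real \<Rightarrow> real" where
  "DE k x = (if x > 0 then poly (PE k) (inverse x) * exp (- inverse x) else 0)"

lemma DE_right_lim: "((\<lambda>y. DE k y / y) \<longlongrightarrow> 0) (at_right 0)"
proof -
  have "((\<lambda>t. poly (pCons 0 (PE k)) t * exp (-t)) \<longlongrightarrow> 0) at_top" by (rule lim_poly_exp)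
  then have "((\<lambda>y. poly (pCons 0 (PE k)) (inverse y) * exp (- inverse y)) \<longlongrightarrow> 0) (at_right (0::real))"
    by (rule filterlim_compose[OF _ filterlim_inverse_at_top_right])
  moreover have "eventually (\<lambda>y. poly (pCons 0 (PE k)) (inverse y) * exp (- inverse y) = DE k y / y) (at_right (0::real))"
    using eventually_at_right_less[of "0::real"] by eventually_elim (simp add: DE_def field_simps)
  ultimately show ?thesis by (rule Lim_transform_eventually)
qed

lemma DE_deriv: "(DE k has_real_derivative DE (Suc k) x) (at x)"
proof (cases "x > 0")
  case True
  have "((\<lambda>y. poly (PE k) (inverse y) * exp (- inverse y)) has_real_derivative DE (Suc k) x) (at x)"
  proof -
    have i: "(inverse has_real_derivative - (inverse x ^ 2)) (at x)"
      using True DERIV_inverse[of x] by (simp add: power2_eq_square)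
    have p: "((\<lambda>y. poly (PE k) (inverse y)) has_real_derivative poly (pderiv (PE k)) (inverse x) * (- (inverse x ^ 2))) (at x)"
      by (rule DERIV_chain2[OF poly_DERIV i])
    have mi: "((\<lambda>y. - inverse y) has_real_derivative (inverse x ^ 2)) (at x)"
      using DERIV_minus[OF i] by simp
    have e: "((\<lambda>y. exp (- inverse y)) has_real_derivative exp (- inverse x) * (inverse x ^ 2)) (at x)"
      by (rule DERIV_chain2[OF DERIV_exp mi])
    have "((\<lambda>y. poly (PE k) (inverse y) * exp (- inverse y)) has_real_derivative
       poly (PE k) (inverse x) * (exp (- inverse x) * (inverse x ^ 2)) + poly (pderiv (PE k)) (inverse x) * (- (inverse x ^ 2)) * exp (- inverse x)) (at x)"
      by (rule DERIV_mult'[OF p e])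
    moreover have "poly (PE k) (inverse x) * (exp (- inverse x) * (inverse x ^ 2)) + poly (pderiv (PE k)) (inverse x) * (- (inverse x ^ 2)) * exp (- inverse x) = DE (Suc k) x"
      using True unfolding DE_def by (simp add: algebra_simps power2_eq_square)
    ultimately show ?thesis by simp
  qed
  then show ?thesis
    by (rule has_field_derivative_transform_within_open[where S="{0<..}"]) (use True in \<open>auto simp: DE_def\<close>)
next
  case False
  show ?thesis
  proof (cases "x < 0")
    case True
    have "((\<lambda>y. 0) has_real_derivative DE (Suc k) x) (at x)"
      using True by (auto simp: DE_def)
    then show ?thesis
      by (rule has_field_derivative_transform_within_open[where S="{..<0}"]) (use True in \<open>auto simp: DE_def\<close>)
  next
    case False
    with \<open>\<not> x > 0\<close> have x0: "x = 0" by simp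
    have "((\<lambda>y. (DE k y - DE k 0) / (y - 0)) \<longlongrightarrow> 0) (at_right 0)"
      using DE_right_lim by (simp add: DE_def)
    moreover have "((\<lambda>y. (DE k y - DE k 0) / (y - 0)) \<longlongrightarrow> 0) (at_left 0)"
      by (rule tendsto_eventually) (use eventually_at_left_real[of "-1" 0, OF neg_less_0_iff_less[THEN iffD2, OF zero_less_one]] in \<open>eventually_elim, simp add: DE_def\<close>)
    ultimately have "((\<lambda>y. (DE k y - DE k 0) / (y - 0)) \<longlongrightarrow> 0) (at 0)"
      by (simp add: filterlim_at_split)
    then show ?thesis using x0 by (simp add: has_field_derivative_iff DE_def)
  qed
qed

definition Efun :: "real \<Rightarrow> real" where "Efun x = (if x > 0 then exp (- inverse x) else 0)"

lemma smooth_Efun: "smooth Efun"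
proof -
  have "DE 0 = Efun" by (simp add: DE_def Efun_def fun_eq_iff)
  then show ?thesis unfolding smooth_def using DE_deriv by blast
qed




lemma smooth_isCont: "smooth f \<Longrightarrow> isCont f x"
  unfolding smooth_def by (metis DERIV_isCont)

lemma smooth_cont_on: "smooth f \<Longrightarrow> continuous_on S f"
  by (simp add: continuous_at_imp_continuous_on smooth_isCont)

lemma smooth_antideriv:
  assumes "smooth f'" "\<And>x. (F has_real_derivative f' x) (at x)" shows "smooth F"
proof -
  obtain A where A: "A 0 = f'" "\<And>k x. (A k has_real_derivative A (Suc k) x) (at x)"
    using assms(1) unfolding smooth_def by blast
  show ?thesis unfolding smooth_def
    apply (rule exI[of _ "\<lambda>n. case n of 0 \<Rightarrow> F | Suc m \<Rightarrow> A m"])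
    using A assms(2) by (auto split: nat.split)
qed

lemma Efun_nonneg: "0 \<le> Efun x" by (simp add: Efun_def)

definition bump :: "real \<Rightarrow> real" where "bump x = Efun x * Efun (1 - x)"

lemma smooth_bump: "smooth bump"
proof -
  have "smooth (\<lambda>x. Efun ((-1) * x + 1))" by (rule smooth_affine[OF smooth_Efun])
  then have "smooth (\<lambda>x. Efun (1 - x))" by simp
  then show ?thesis unfolding bump_def[abs_def] by (rule smooth_mult[OF smooth_Efun])
qed

lemma bump_nonneg: "0 \<le> bump x" by (simp add: bump_def Efun_nonneg)
lemma bump_zero: "x \<le> 0 \<or> 1 \<le> x \<Longrightarrow> bump x = 0" by (auto simp: bump_def Efun_def)
lemma bump_pos: "0 < x \<Longrightarrow> x < 1 \<Longrightarrow> 0 < bump x" by (simp add: bump_def Efun_def)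

definition sb :: "real \<Rightarrow> real \<Rightarrow> real \<Rightarrow> real" where
  "sb p q x = bump ((x - p) / (q - p))"

lemma smooth_sb: "smooth (sb p q)"
proof -
  have "smooth (\<lambda>x. bump (inverse (q - p) * x + (- p * inverse (q - p))))"
    by (rule smooth_affine[OF smooth_bump])
  moreover have "(\<lambda>x. bump (inverse (q - p) * x + (- p * inverse (q - p)))) = sb p q"
    by (auto simp: sb_def fun_eq_iff divide_inverse algebra_simps)
  ultimately show ?thesis by simp
qed

lemma sb_nonneg: "0 \<le> sb p q x" by (simp add: sb_def bump_nonneg)

lemma sb_zero: "p < q \<Longrightarrow> x \<le> p \<or> q \<le> x \<Longrightarrow> sb p q x = 0"
  unfolding sb_def by (rule bump_zero) (auto simp: field_simps)

lemma sb_pos: "p < q \<Longrightarrow> p < x \<Longrightarrow> x < q \<Longrightarrow> 0 < sb p q x"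
  unfolding sb_def by (rule bump_pos) (auto simp: field_simps)

lemma sb_cont: "continuous_on S (sb p q)"
  by (rule smooth_cont_on[OF smooth_sb])

definition Isb where "Isb p q = integral {p..q} (sb p q)"

lemma Isb_pos: assumes "p < q" shows "0 < Isb p q"
proof -
  have int: "sb p q integrable_on {p..q}" by (rule integrable_continuous_real[OF sb_cont])
  have ge: "0 \<le> Isb p q" unfolding Isb_def by (rule integral_nonneg[OF int]) (simp add: sb_nonneg)
  have "Isb p q \<noteq> 0"
  proof
    assume "Isb p q = 0"
    then have "\<forall>x\<in>cbox p q. sb p q x = 0"
      using integral_cbox_eq_0_iff[of p q "sb p q"] assms sb_cont sb_nonneg
      by (auto simp: Isb_def)
    moreover have "(p+q)/2 \<in> cbox p q" using assms by auto
    moreover have "0 < sb p q ((p+q)/2)" using assms by (intro sb_pos) auto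
    ultimately show False by auto
  qed
  with ge show ?thesis by simp
qed

definition ramp :: "real \<Rightarrow> real \<Rightarrow> real \<Rightarrow> real" where
  "ramp p q x = integral {p-1..x} (sb p q) / Isb p q"

definition rampd :: "real \<Rightarrow> real \<Rightarrow> real \<Rightarrow> real" where
  "rampd p q x = sb p q x / Isb p q"

lemma ramp_zero: assumes "p < q" "x \<le> p" shows "ramp p q x = 0"
proof -
  have "integral {p-1..x} (sb p q) = integral {p-1..x} (\<lambda>_. 0)"
    by (rule integral_cong) (use assms in \<open>auto intro: sb_zero\<close>)
  then show ?thesis by (simp add: ramp_def)
qed

lemma ramp_deriv: assumes "p < q" shows "(ramp p q has_real_derivative rampd p q x) (at x)"
proof (cases "x < p")
  case True
  have "((\<lambda>_. 0) has_real_derivative rampd p q x) (at x)"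
    using True assms by (simp add: rampd_def sb_zero)
  then show ?thesis
    by (rule has_field_derivative_transform_within_open[where S="{..<p}"])
       (use True assms in \<open>auto simp: ramp_zero\<close>)
next
  case False
  then have x: "x \<in> {p-1<..<x+1}" by auto
  have "((\<lambda>u. integral {p-1..u} (sb p q)) has_real_derivative sb p q x) (at x within {p-1..x+1})"
    by (rule integral_has_real_derivative[OF sb_cont]) (use x in auto)
  then have "((\<lambda>u. integral {p-1..u} (sb p q)) has_real_derivative sb p q x) (at x)"
    using at_within_interior[of x "{p-1..x+1}"] x by simp
  then show ?thesis unfolding ramp_def[abs_def] rampd_def by (rule DERIV_cdivide)
qed

lemma rampd_nonneg: "p < q \<Longrightarrow> 0 \<le> rampd p q x"
  using Isb_pos[of p q] by (simp add: rampd_def sb_nonneg)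

lemma rampd_zero: "p < q \<Longrightarrow> x \<le> p \<or> q \<le> x \<Longrightarrow> rampd p q x = 0"
  by (simp add: rampd_def sb_zero)

lemma smooth_rampd: "smooth (rampd p q)"
  unfolding rampd_def using smooth_cmult[OF smooth_sb, of "inverse (Isb p q)" p q]
  by (simp add: divide_inverse mult.commute)

lemma smooth_ramp: "p < q \<Longrightarrow> smooth (ramp p q)"
  by (rule smooth_antideriv[OF smooth_rampd ramp_deriv])

lemma integral_rampd: assumes "p < q" shows "integral {p..q} (rampd p q) = 1"
proof -
  have int: "sb p q integrable_on {p..q}" by (rule integrable_continuous_real[OF sb_cont])
  have "integral {p..q} (rampd p q) = integral {p..q} (\<lambda>x. inverse (Isb p q) * sb p q x)"
    by (rule integral_cong) (simp add: rampd_def divide_inverse mult.commute)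
  also have "\<dots> = inverse (Isb p q) * Isb p q"
    using integral_mult[OF int, of "inverse (Isb p q)"] by (simp add: Isb_def)
  finally show ?thesis using Isb_pos[OF assms] by simp
qed

lemma ramp_mono: assumes "p < q" "x \<le> y" shows "ramp p q x \<le> ramp p q y"
  by (rule DERIV_nonneg_imp_nondecreasing[OF assms(2)]) (use ramp_deriv rampd_nonneg assms in blast)

lemma ramp_one: assumes "p < q" "q \<le> x" shows "ramp p q x = 1"
proof -
  have int: "sb p q integrable_on {p-1..x}" by (rule integrable_continuous_real[OF sb_cont])
  have "integral {p-1..p} (sb p q) + integral {p..x} (sb p q) = integral {p-1..x} (sb p q)"
    by (rule Henstock_Kurzweil_Integration.integral_combine) (use assms int in auto)
  moreover have "integral {p-1..p} (sb p q) = integral {p-1..p} (\<lambda>_. 0)"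
    by (rule integral_cong) (use assms in \<open>auto intro: sb_zero\<close>)
  moreover have i2: "sb p q integrable_on {p..x}" by (rule integrable_continuous_real[OF sb_cont])
  have "integral {p..q} (sb p q) + integral {q..x} (sb p q) = integral {p..x} (sb p q)"
    by (rule Henstock_Kurzweil_Integration.integral_combine) (use assms i2 in auto)
  moreover have "integral {q..x} (sb p q) = integral {q..x} (\<lambda>_. 0)"
    by (rule integral_cong) (use assms in \<open>auto intro: sb_zero\<close>)
  ultimately show ?thesis using Isb_pos[OF assms(1)] by (simp add: ramp_def Isb_def)
qed

lemma ramp_nonneg: "p < q \<Longrightarrow> 0 \<le> ramp p q x"
  using ramp_mono[of p q "min x p" x] ramp_zero[of p q "min x p"] by simp

lemma ramp_le1: "p < q \<Longrightarrow> ramp p q x \<le> 1"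
  using ramp_mono[of p q x "max x q"] ramp_one[of p q "max x q"] by simp




lemma LINT_cont:
  fixes f :: "real \<Rightarrow> real"
  assumes "continuous_on {0..1} f"
  shows "set_integrable lborel {0<..<1} f" "(LINT x:{0<..<1}|lborel. f x) = integral {0..1} f"
proof -
  have "set_integrable lborel {0..1} f" by (rule borel_integrable_atLeastAtMost'[OF assms])
  then show si: "set_integrable lborel {0<..<1} f" by (rule set_integrable_subset) auto
  show "(LINT x:{0<..<1}|lborel. f x) = integral {0..1} f"
    using set_borel_integral_eq_integral(2)[OF si] integral_open_interval_real[of 0 1 f] by simp
qed

lemma L2_cont: "continuous_on {0..1} f \<Longrightarrow> L2_01 f"
proof -
  assume c: "continuous_on {0..1} f"
  have c2: "continuous_on {0..1} (\<lambda>x. (f x)^2)" by (intro continuous_intros c)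
  have "set_integrable lborel {0<..<1} f" by (rule LINT_cont(1)[OF c])
  then have "set_borel_measurable lborel {0<..<1} f"
    unfolding set_integrable_def set_borel_measurable_def by (rule borel_measurable_integrable)
  then show ?thesis unfolding L2_01_def using LINT_cont(1)[OF c2] by simp
qed

lemma ibp01:
  fixes u v u' v' :: "real \<Rightarrow> real"
  assumes du: "\<And>x. x \<in> {0..1} \<Longrightarrow> (u has_real_derivative u' x) (at x within {0..1})"
    and dv: "\<And>x. x \<in> {0..1} \<Longrightarrow> (v has_real_derivative v' x) (at x within {0..1})"
    and cu': "continuous_on {0..1} u'" and cv': "continuous_on {0..1} v'"
    and b0: "u 0 * v 0 = 0" and b1: "u 1 * v 1 = 0"
  shows "integral {0..1} (\<lambda>x. u x * v' x) = - integral {0..1} (\<lambda>x. u' x * v x)"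
proof -
  have cu: "continuous_on {0..1} u" by (rule DERIV_continuous_on[OF du])
  have cv: "continuous_on {0..1} v" by (rule DERIV_continuous_on[OF dv])
  have "((\<lambda>x. u x * v' x + u' x * v x) has_integral (u 1 * v 1 - u 0 * v 0)) {0..1}"
    apply (rule fundamental_theorem_of_calculus[of 0 1 "\<lambda>x. u x * v x", simplified has_real_derivative_iff_has_vector_derivative[symmetric]])
     apply simp
    using DERIV_mult'[OF du dv] by (simp add: algebra_simps)
  then have "integral {0..1} (\<lambda>x. u x * v' x + u' x * v x) = 0" using b0 b1 by (simp add: integral_unique)
  moreover have "integral {0..1} (\<lambda>x. u x * v' x + u' x * v x) = integral {0..1} (\<lambda>x. u x * v' x) + integral {0..1} (\<lambda>x. u' x * v x)"
    by (rule integral_add; rule integrable_continuous_real; intro continuous_intros cu cv cu' cv')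
  ultimately show ?thesis by simp
qed

lemma test_fun_deriv:
  assumes "test_fun \<psi>"
  obtains \<psi>' a b where "\<And>x. (\<psi> has_real_derivative \<psi>' x) (at x)" "test_fun \<psi>'"
    "0 < a" "a \<le> b" "b < 1" "\<And>x. x \<notin> {a..b} \<Longrightarrow> \<psi> x = 0" "\<And>x. x \<notin> {a..b} \<Longrightarrow> \<psi>' x = 0"
    "continuous_on UNIV \<psi>" "continuous_on UNIV \<psi>'" "deriv \<psi> = \<psi>'"
proof -
  obtain D where D: "D 0 = \<psi>" "\<And>k x. (D k has_real_derivative D (Suc k) x) (at x)"
    using assms unfolding test_fun_def by blast
  obtain a b where ab: "0 < a" "a \<le> b" "b < 1" "\<And>x. x \<notin> {a..b} \<Longrightarrow> \<psi> x = 0"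
    using assms unfolding test_fun_def by blast
  have d1: "(\<psi> has_real_derivative D 1 x) (at x)" for x using D by (metis One_nat_def)
  have z: "D 1 x = 0" if "x \<notin> {a..b}" for x
  proof -
    have "((\<lambda>_. 0) has_real_derivative 0) (at x)" by simp
    then have "(\<psi> has_real_derivative 0) (at x)"
      by (rule has_field_derivative_transform_within_open[where S="- {a..b}"]) (use that ab in auto)
    then show ?thesis using DERIV_unique d1 by blast
  qed
  have t': "test_fun (D 1)" unfolding test_fun_def
    using D(2) ab z by (intro conjI exI[of _ "\<lambda>k. D (Suc k)"] exI[of _ a] exI[of _ b]) auto
  have c: "continuous_on UNIV \<psi>" using d1 by (meson DERIV_isCont continuous_at_imp_continuous_on)
  have c': "continuous_on UNIV (D 1)" using D(2) by (meson DERIV_isCont continuous_at_imp_continuous_on)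
  have "deriv \<psi> = D 1" using d1 by (auto intro: DERIV_imp_deriv)
  then show ?thesis using that[OF d1 t' ab(1-3) ab(4) z c c'] by blast
qed

lemma test_ibp:
  fixes u u' :: "real \<Rightarrow> real"
  assumes du: "\<And>x. x \<in> {0..1} \<Longrightarrow> (u has_real_derivative u' x) (at x within {0..1})"
    and cu': "continuous_on {0..1} u'" and t: "test_fun \<theta>"
  shows "(LINT x:{0<..<1}|lborel. u x * deriv \<theta> x) = - (LINT x:{0<..<1}|lborel. u' x * \<theta> x)"
proof -
  obtain \<theta>' a b where X: "\<And>x. (\<theta> has_real_derivative \<theta>' x) (at x)" "test_fun \<theta>'"
    "0 < a" "a \<le> b" "b < 1" "\<And>x. x \<notin> {a..b} \<Longrightarrow> \<theta> x = 0" "\<And>x. x \<notin> {a..b} \<Longrightarrow> \<theta>' x = 0"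
    "continuous_on UNIV \<theta>" "continuous_on UNIV \<theta>'" "deriv \<theta> = \<theta>'"
    using test_fun_deriv[OF t] by blast
  have cu: "continuous_on {0..1} u" by (rule DERIV_continuous_on[OF du])
  have c\<theta>: "continuous_on {0..1} \<theta>" "continuous_on {0..1} \<theta>'" using X(8,9) continuous_on_subset by blast+
  have "(LINT x:{0<..<1}|lborel. u x * deriv \<theta> x) = integral {0..1} (\<lambda>x. u x * \<theta>' x)"
    unfolding X(10) by (rule LINT_cont(2)) (intro continuous_intros cu c\<theta>)
  also have "\<dots> = - integral {0..1} (\<lambda>x. u' x * \<theta> x)"
  proof (rule ibp01[OF du _ cu' c\<theta>(2)])
    show "(\<theta> has_real_derivative \<theta>' x) (at x within {0..1})" for x using X(1) has_field_derivative_at_within by blast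
    show "u 0 * \<theta> 0 = 0" "u 1 * \<theta> 1 = 0" using X(3,5,6) by auto
  qed
  also have "integral {0..1} (\<lambda>x. u' x * \<theta> x) = (LINT x:{0<..<1}|lborel. u' x * \<theta> x)"
    by (rule LINT_cont(2)[symmetric]) (intro continuous_intros cu' c\<theta>)
  finally show ?thesis .
qed

lemma test_W12_0:
  assumes t: "test_fun \<psi>"
  shows "W12_0_deriv \<psi> (deriv \<psi>)"
proof -
  obtain \<psi>' a b where X: "\<And>x. (\<psi> has_real_derivative \<psi>' x) (at x)" "test_fun \<psi>'"
    "0 < a" "a \<le> b" "b < 1" "\<And>x. x \<notin> {a..b} \<Longrightarrow> \<psi> x = 0" "\<And>x. x \<notin> {a..b} \<Longrightarrow> \<psi>' x = 0"
    "continuous_on UNIV \<psi>" "continuous_on UNIV \<psi>'" "deriv \<psi> = \<psi>'"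
    using test_fun_deriv[OF t] by blast
  have c: "continuous_on {0..1} \<psi>" "continuous_on {0..1} \<psi>'" using X(8,9) continuous_on_subset by blast+
  have W: "W12_deriv \<psi> \<psi>'"
    unfolding W12_deriv_def
  proof (intro conjI allI impI)
    show "L2_01 \<psi>" "L2_01 \<psi>'" by (rule L2_cont, fact)+
    fix \<theta> assume "test_fun \<theta>"
    then show "(LINT x:{0<..<1}|lborel. \<psi> x * deriv \<theta> x) = - (LINT x:{0<..<1}|lborel. \<psi>' x * \<theta> x)"
      by (intro test_ibp[of \<psi> \<psi>'] c(2)) (use X(1) has_field_derivative_at_within in blast)
  qed
  show ?thesis unfolding W12_0_deriv_def X(10)
    by (intro conjI W exI[of _ "\<lambda>_. \<psi>"]) (use X(2) t in \<open>simp_all add: X(10)\<close>)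
qed




definition tf :: "real \<Rightarrow> real \<Rightarrow> real \<Rightarrow> real \<Rightarrow> real \<Rightarrow> real" where
  "tf p q r s x = ramp p q x - ramp r s x"

definition tfd :: "real \<Rightarrow> real \<Rightarrow> real \<Rightarrow> real \<Rightarrow> real \<Rightarrow> real" where
  "tfd p q r s x = rampd p q x - rampd r s x"

context
  fixes p q r s :: real
  assumes pq: "p < q" and qr: "q \<le> r" and rs: "r < s"
begin

lemma tf_deriv: "(tf p q r s has_real_derivative tfd p q r s x) (at x)"
  unfolding tf_def[abs_def] tfd_def using ramp_deriv pq rs by (intro DERIV_diff) auto

lemma tf_deriv_eq: "deriv (tf p q r s) = tfd p q r s"
  using tf_deriv by (auto intro: DERIV_imp_deriv)

lemma tf_zero: "x \<le> p \<or> s \<le> x \<Longrightarrow> tf p q r s x = 0"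
  using pq qr rs by (auto simp: tf_def ramp_zero ramp_one)

lemma tf_one: "q \<le> x \<Longrightarrow> x \<le> r \<Longrightarrow> tf p q r s x = 1"
  using pq qr rs by (auto simp: tf_def ramp_zero ramp_one)

lemma tf_bounds: "0 \<le> tf p q r s x \<and> tf p q r s x \<le> 1"
proof (cases "x \<le> r")
  case True
  then show ?thesis using pq rs ramp_nonneg[of p q x] ramp_le1[of p q x] by (simp add: tf_def ramp_zero)
next
  case False
  then show ?thesis using pq qr rs ramp_nonneg[of r s x] ramp_le1[of r s x] by (simp add: tf_def ramp_one)
qed

lemma tf_test: "0 < p \<Longrightarrow> s < 1 \<Longrightarrow> test_fun (tf p q r s)"
proof -
  assume p0: "0 < p" and s1: "s < 1"
  have "smooth (tf p q r s)" unfolding tf_def[abs_def]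
    by (intro smooth_diff smooth_ramp pq rs)
  then show ?thesis unfolding test_fun_def smooth_def
    using p0 s1 pq qr rs tf_zero by (intro conjI exI[of _ p] exI[of _ s]) auto
qed

lemma tf_cont: "continuous_on S (tf p q r s)"
  using tf_deriv by (meson DERIV_isCont continuous_at_imp_continuous_on)

lemma tfd_cont: "continuous_on S (tfd p q r s)"
  unfolding tfd_def[abs_def] rampd_def[abs_def] using Isb_pos[OF pq] Isb_pos[OF rs] by (intro continuous_intros sb_cont) auto

end




lemma interval_zero:
  fixes F :: "real \<Rightarrow> real"
  assumes int: "integrable lborel F"
    and orth: "\<And>\<psi>. test_fun \<psi> \<Longrightarrow> (\<integral>x. F x * \<psi> x \<partial>lborel) = 0"
    and st: "0 \<le> s" "s < t" "t \<le> 1"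
  shows "(\<integral>x. F x * indicator {s<..<t} x \<partial>lborel) = 0"
proof -
  define \<delta> where "\<delta> n = (t - s) / (real n + 4)" for n :: nat
  define \<psi> where "\<psi> n = tf (s + \<delta> n / 2) (s + \<delta> n) (t - \<delta> n) (t - \<delta> n / 2)" for n
  have dpos: "0 < \<delta> n" for n using st by (simp add: \<delta>_def)
  have dle: "\<delta> n \<le> (t - s) / 4" for n using st unfolding \<delta>_def by (intro divide_left_mono) auto
  have o1: "s + \<delta> n / 2 < s + \<delta> n" "s + \<delta> n \<le> t - \<delta> n" "t - \<delta> n < t - \<delta> n / 2" for n
    using dpos[of n] dle[of n] by auto
  have tst: "test_fun (\<psi> n)" for n
    unfolding \<psi>_def by (rule tf_test) (use o1[of n] dpos[of n] st in auto)
  have Fm[measurable]: "F \<in> borel_measurable lborel" by (rule borel_measurable_integrable[OF int])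
  have \<psi>m[measurable]: "\<psi> n \<in> borel_measurable lborel" for n
    unfolding \<psi>_def using borel_measurable_continuous_onI[OF tf_cont[OF o1(1,2,3)]] by simp
  have lim: "(\<lambda>n. F x * \<psi> n x) \<longlonglongrightarrow> F x * indicator {s<..<t} x" for x
  proof (cases "s < x \<and> x < t")
    case True
    define m where "m = min (x - s) (t - x)"
    have m: "0 < m" using True by (simp add: m_def)
    obtain N :: nat where N: "(t - s) / m < real N" using reals_Archimedean2 by blast
    have "eventually (\<lambda>n. \<psi> n x = 1) sequentially"
    proof (rule eventually_sequentiallyI[of N])
      fix n assume "N \<le> n"
      then have "(t - s) / m < real n + 4" using N by linarith
      then have "t - s < m * (real n + 4)" using m by (simp add: field_simps)
      then have "\<delta> n < m" using m by (simp add: \<delta>_def field_simps)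
      then have "s + \<delta> n \<le> x" "x \<le> t - \<delta> n" unfolding m_def by auto
      then show "\<psi> n x = 1" unfolding \<psi>_def using tf_one[OF o1(1,2,3)] by blast
    qed
    then have "(\<lambda>n. \<psi> n x) \<longlonglongrightarrow> 1" by (rule tendsto_eventually)
    then have "(\<lambda>n. F x * \<psi> n x) \<longlonglongrightarrow> F x * 1" by (rule tendsto_mult_left)
    then show ?thesis using True by simp
  next
    case False
    then have "\<psi> n x = 0" for n unfolding \<psi>_def
      by (intro tf_zero[OF o1(1,2,3)]) (use dpos[of n] in auto)
    then show ?thesis using False by simp
  qed
  have "(\<lambda>n. \<integral>x. F x * \<psi> n x \<partial>lborel) \<longlonglongrightarrow> (\<integral>x. F x * indicator {s<..<t} x \<partial>lborel)"
  proof (rule integral_dominated_convergence[where w="\<lambda>x. norm (F x)"])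
    show "\<And>n. AE x in lborel. norm (F x * \<psi> n x) \<le> norm (F x)"
      using tf_bounds[OF o1(1,2,3)] unfolding \<psi>_def
      by (auto simp: abs_mult intro!: mult_left_le)
  qed (use lim int in auto)
  moreover have "(\<lambda>n. \<integral>x. F x * \<psi> n x \<partial>lborel) = (\<lambda>n. 0)" using orth tst by auto
  ultimately show ?thesis using LIMSEQ_unique tendsto_const by metis
qed

lemma ae_zero:
  fixes F :: "real \<Rightarrow> real"
  assumes int: "integrable lborel F"
    and orth: "\<And>\<psi>. test_fun \<psi> \<Longrightarrow> (\<integral>x. F x * \<psi> x \<partial>lborel) = 0"
    and supp: "\<And>x. x \<notin> {0<..<1} \<Longrightarrow> F x = 0"
  shows "AE x in lborel. F x = 0"
proof -
  have Fm[measurable]: "F \<in> borel_measurable lborel" by (rule borel_measurable_integrable[OF int])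
  have Ia: "(\<integral>x. F x * indicator {a<..} x \<partial>lborel) = 0" for a
  proof (cases "a < 1")
    case True
    have "(\<lambda>x. F x * indicator {a<..} x) = (\<lambda>x. F x * indicator {max a 0<..<1} x)"
      using supp by (auto simp: fun_eq_iff indicator_def)
    moreover have "(\<integral>x. F x * indicator {max a 0<..<1} x \<partial>lborel) = 0"
      by (rule interval_zero[OF int orth]) (use True in auto)
    ultimately show ?thesis by simp
  next
    case False
    then have "(\<lambda>x. F x * indicator {a<..} x) = (\<lambda>x. 0)"
      using supp by (auto simp: fun_eq_iff indicator_def)
    then show ?thesis by simp
  qed
  define Fp where "Fp x = max 0 (F x)" for x
  define Fn where "Fn x = max 0 (- F x)" for x
  have ip: "integrable lborel Fp" unfolding Fp_def using int by auto
  have in': "integrable lborel Fn" unfolding Fn_def using int by auto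
  have [measurable]: "Fp \<in> borel_measurable lborel" "Fn \<in> borel_measurable lborel"
    unfolding Fp_def Fn_def by measurable
  have F_eq: "F x = Fp x - Fn x" for x by (simp add: Fp_def Fn_def)
  have ipa: "integrable lborel (\<lambda>x. indicator {a<..} x *\<^sub>R Fp x)" for a
    by (rule integrable_mult_indicator[OF _ ip]) simp
  have ina: "integrable lborel (\<lambda>x. indicator {a<..} x *\<^sub>R Fn x)" for a
    by (rule integrable_mult_indicator[OF _ in']) simp
  have eqa: "(\<integral>x. indicator {a<..} x *\<^sub>R Fp x \<partial>lborel) = (\<integral>x. indicator {a<..} x *\<^sub>R Fn x \<partial>lborel)" for a
  proof -
    have "(\<integral>x. indicator {a<..} x *\<^sub>R Fp x - indicator {a<..} x *\<^sub>R Fn x \<partial>lborel) = 0"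
      using Ia[of a] by (simp add: F_eq algebra_simps indicator_def)
    then show ?thesis using Bochner_Integration.integral_diff[OF ipa ina] by simp
  qed
  have em: "emeasure (density lborel (\<lambda>x. ennreal (G x))) {a<..} = ennreal (\<integral>x. indicator {a<..} x *\<^sub>R G x \<partial>lborel)"
    if [measurable]: "G \<in> borel_measurable lborel" and Gi: "integrable lborel (\<lambda>x. indicator {a<..} x *\<^sub>R G x)"
      and Gn: "\<And>x. 0 \<le> G x" for G :: "real \<Rightarrow> real" and a :: real
  proof -
    have "emeasure (density lborel (\<lambda>x. ennreal (G x))) {a<..} = (\<integral>\<^sup>+ x. ennreal (G x) * indicator {a<..} x \<partial>lborel)"
      by (rule emeasure_density) (use borel_open[OF open_greaterThan, of a] in simp_all)
    also have "\<dots> = (\<integral>\<^sup>+ x. ennreal (indicator {a<..} x *\<^sub>R G x) \<partial>lborel)"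
      by (intro nn_integral_cong) (auto simp: indicator_def)
    also have "\<dots> = ennreal (\<integral>x. indicator {a<..} x *\<^sub>R G x \<partial>lborel)"
      by (rule nn_integral_eq_integral[OF Gi]) (auto simp: Gn indicator_def)
    finally show ?thesis .
  qed
  have Fpn: "0 \<le> Fp x" "0 \<le> Fn x" for x by (simp_all add: Fp_def Fn_def)
  have e1: "emeasure (density lborel (\<lambda>x. ennreal (Fp x))) {a<..} = ennreal (\<integral>x. indicator {a<..} x *\<^sub>R Fp x \<partial>lborel)" for a
    by (rule em) (use ipa Fpn in auto)
  have e2: "emeasure (density lborel (\<lambda>x. ennreal (Fn x))) {a<..} = ennreal (\<integral>x. indicator {a<..} x *\<^sub>R Fn x \<partial>lborel)" for a
    by (rule em) (use ina Fpn in auto)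
  have "density lborel (\<lambda>x. ennreal (Fp x)) = density lborel (\<lambda>x. ennreal (Fn x))"
  proof (rule measure_eqI_lessThan)
    fix a
    show "emeasure (density lborel (\<lambda>x. ennreal (Fp x))) {a<..} < \<infinity>"
      unfolding e1 by simp
    show "emeasure (density lborel (\<lambda>x. ennreal (Fp x))) {a<..} = emeasure (density lborel (\<lambda>x. ennreal (Fn x))) {a<..}"
      unfolding e1 e2 eqa ..
  qed simp_all
  then have "AE x in lborel. ennreal (Fp x) = ennreal (Fn x)"
    by (intro sigma_finite_measure.density_unique[OF sigma_finite_lborel]) simp_all
  then show ?thesis
  proof eventually_elim
    fix x assume "ennreal (Fp x) = ennreal (Fn x)"
    then have "Fp x = Fn x" using Fpn[of x] by simp
    then show "F x = 0" by (simp add: F_eq)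
  qed
qed




lemma abs_le_1_sq: "\<bar>y::real\<bar> \<le> 1 + y^2"
proof (cases "\<bar>y\<bar> \<le> 1")
  case True then show ?thesis by (simp add: add_increasing2)
next
  case False
  then have "\<bar>y\<bar> \<le> \<bar>y\<bar> * \<bar>y\<bar>" using mult_left_mono[of 1 "\<bar>y\<bar>" "\<bar>y\<bar>"] by simp
  then show ?thesis using abs_mult_self_eq[of y] by (simp add: power2_eq_square)
qed

lemma L2_set_integrable:
  assumes "L2_01 g" shows "set_integrable lborel {0<..<1} g"
proof -
  have m: "(\<lambda>x. indicator {0<..<1} x *\<^sub>R g x) \<in> borel_measurable lborel"
    using assms unfolding L2_01_def set_borel_measurable_def by simp
  have i1: "set_integrable lborel {0<..<1} (\<lambda>x::real. 1::real)"
    using LINT_cont(1)[of "\<lambda>x. 1"] by simp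
  have "set_integrable lborel {0<..<1} (\<lambda>x. 1 + (g x)^2)"
    using i1 assms unfolding L2_01_def by (intro set_integral_add(1)) auto
  then have i: "integrable lborel (\<lambda>x. indicator {0<..<1} x *\<^sub>R (1 + (g x)^2))"
    unfolding set_integrable_def .
  have b: "AE x in lborel. norm (indicator {0<..<1} x *\<^sub>R g x) \<le> norm (indicator {0<..<1} x *\<^sub>R (1 + (g x)^2))"
    using abs_le_1_sq by (intro AE_I2) (auto simp: indicator_def)
  show ?thesis unfolding set_integrable_def
    apply (rule Bochner_Integration.integrable_bound[OF i])
     apply (fact m)
    by (fact b)
qed

lemma set_integrable_mult_cont:
  fixes g h :: "real \<Rightarrow> real"
  assumes gi: "set_integrable lborel {0<..<1} g" and hc: "continuous_on UNIV h"
  shows "set_integrable lborel {0<..<1} (\<lambda>x. g x * h x)"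
proof -
  have "compact (h ` {0..1})" by (rule compact_continuous_image[OF continuous_on_subset[OF hc]]) auto
  then obtain B where B: "B > 0" "\<And>y. y \<in> h ` {0..1} \<Longrightarrow> norm y \<le> B"
    using compact_imp_bounded bounded_pos by metis
  have hm: "h \<in> borel_measurable lborel" using borel_measurable_continuous_onI[OF hc] by simp
  have gm: "(\<lambda>x. indicator {0<..<1} x *\<^sub>R g x) \<in> borel_measurable lborel"
    using gi unfolding set_integrable_def by (rule borel_measurable_integrable)
  have i: "integrable lborel (\<lambda>x. B * (indicator {0<..<1} x *\<^sub>R g x))"
    using gi unfolding set_integrable_def by simp
  have m: "(\<lambda>x. indicator {0<..<1} x *\<^sub>R (g x * h x)) \<in> borel_measurable lborel"
    using borel_measurable_times[OF gm hm] by (simp add: mult.assoc)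
  have b: "AE x in lborel. norm (indicator {0<..<1} x *\<^sub>R (g x * h x)) \<le> norm (B * (indicator {0<..<1} x *\<^sub>R g x))"
  proof (rule AE_I2)
    fix x show "norm (indicator {0<..<1} x *\<^sub>R (g x * h x)) \<le> norm (B * (indicator {0<..<1} x *\<^sub>R g x))"
    proof (cases "x \<in> {0<..<1}")
      case True
      then have "\<bar>h x\<bar> \<le> B" using B(2)[of "h x"] by auto
      then show ?thesis using True B(1) mult_right_mono[of "\<bar>h x\<bar>" B "\<bar>g x\<bar>"] by (simp add: abs_mult mult.commute)
    qed simp
  qed
  show ?thesis unfolding set_integrable_def
    apply (rule Bochner_Integration.integrable_bound[OF i])
     apply (fact m)
    by (fact b)
qed


definition clamp :: "real \<Rightarrow> real" where "clamp x = max 0 (min 1 x)"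

lemma clamp_cont: "continuous_on {0..1} f \<Longrightarrow> continuous_on UNIV (\<lambda>x. f (clamp x))"
  unfolding clamp_def
  by (rule continuous_on_compose2[of "{0..1}" f]) (auto intro!: continuous_intros)

lemma clamp_id: "x \<in> {0..1} \<Longrightarrow> clamp x = x" by (simp add: clamp_def)

lemma ws_test:
  assumes ws: "weak_solution_S \<epsilon> \<Omega>A \<Omega>D \<alpha> \<beta> \<rho>" and C1: "C1_01 \<rho>"
  obtains D where "continuous_on {0..1} D" "\<And>x. x \<in> {0..1} \<Longrightarrow> (\<rho> has_real_derivative D x) (at x within {0..1})"
    "\<And>\<psi>. test_fun \<psi> \<Longrightarrow> integral {0..1} (\<lambda>x. \<epsilon> / 2 * D x * deriv \<psi> x
              - ((2 * \<rho> x - 1) * D x + \<Omega>A * (1 - \<rho> x) - \<Omega>D * \<rho> x) * \<psi> x) = 0"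
proof -
  let ?S = "{0<..<1::real}"
  have S[measurable]: "?S \<in> sets lborel" by simp
  have c\<rho>: "continuous_on {0..1} \<rho>" using ws unfolding weak_solution_S_def by blast
  obtain g where W: "W12_deriv \<rho> g" and E: "\<And>\<phi> h. W12_0_deriv \<phi> h \<Longrightarrow>
           (LINT x:?S|lborel. \<epsilon> / 2 * g x * h x
              - ((2 * \<rho> x - 1) * g x + \<Omega>A * (1 - \<rho> x) - \<Omega>D * \<rho> x) * \<phi> x) = 0"
    using ws unfolding weak_solution_S_def by blast
  obtain D where cD: "continuous_on {0..1} D" and dD: "\<And>x. x \<in> {0..1} \<Longrightarrow> (\<rho> has_real_derivative D x) (at x within {0..1})"
    using C1 unfolding C1_01_def by blast
  define \<rho>c where "\<rho>c x = \<rho> (clamp x)" for x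
  define Dc where "Dc x = D (clamp x)" for x
  have c\<rho>c: "continuous_on UNIV \<rho>c" unfolding \<rho>c_def by (rule clamp_cont[OF c\<rho>])
  have cDc: "continuous_on UNIV Dc" unfolding Dc_def by (rule clamp_cont[OF cD])
  have \<rho>c_eq: "x \<in> {0..1} \<Longrightarrow> \<rho>c x = \<rho> x" for x by (simp add: \<rho>c_def clamp_id)
  have Dc_eq: "x \<in> {0..1} \<Longrightarrow> Dc x = D x" for x by (simp add: Dc_def clamp_id)
  have [measurable]: "\<rho>c \<in> borel_measurable lborel" "Dc \<in> borel_measurable lborel"
    using borel_measurable_continuous_onI[OF c\<rho>c] borel_measurable_continuous_onI[OF cDc] by simp_all
  have gi: "set_integrable lborel ?S g" using W unfolding W12_deriv_def by (intro L2_set_integrable) blast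
  have gm[measurable]: "(\<lambda>x. indicator ?S x *\<^sub>R g x) \<in> borel_measurable lborel"
    using gi unfolding set_integrable_def by (rule borel_measurable_integrable)
  have Dci: "set_integrable lborel ?S Dc" by (rule LINT_cont(1)) (rule continuous_on_subset[OF cDc], simp)
  define F where "F x = indicator ?S x *\<^sub>R g x - indicator ?S x *\<^sub>R Dc x" for x
  have Fi: "integrable lborel F" unfolding F_def using gi Dci unfolding set_integrable_def by auto
  have orth: "(\<integral>x. F x * \<psi> x \<partial>lborel) = 0" if t: "test_fun \<psi>" for \<psi>
  proof -
    obtain \<psi>' a b where X: "\<And>x. (\<psi> has_real_derivative \<psi>' x) (at x)" "test_fun \<psi>'"
      "0 < a" "a \<le> b" "b < 1" "\<And>x. x \<notin> {a..b} \<Longrightarrow> \<psi> x = 0" "\<And>x. x \<notin> {a..b} \<Longrightarrow> \<psi>' x = 0"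
      "continuous_on UNIV \<psi>" "continuous_on UNIV \<psi>'" "deriv \<psi> = \<psi>'"
      using test_fun_deriv[OF t] by blast
    have i1: "set_integrable lborel ?S (\<lambda>x. g x * \<psi> x)" by (rule set_integrable_mult_cont[OF gi X(8)])
    have i2: "set_integrable lborel ?S (\<lambda>x. Dc x * \<psi> x)" by (rule set_integrable_mult_cont[OF Dci X(8)])
    have "(LINT x:?S|lborel. \<rho> x * deriv \<psi> x) = - (LINT x:?S|lborel. g x * \<psi> x)"
      using W t unfolding W12_deriv_def by blast
    moreover have "(LINT x:?S|lborel. \<rho> x * deriv \<psi> x) = - (LINT x:?S|lborel. D x * \<psi> x)"
      by (rule test_ibp[OF dD cD t])
    moreover have "(LINT x:?S|lborel. D x * \<psi> x) = (LINT x:?S|lborel. Dc x * \<psi> x)"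
      by (rule set_lebesgue_integral_cong) (auto simp: Dc_eq)
    ultimately have eq: "(LINT x:?S|lborel. g x * \<psi> x) = (LINT x:?S|lborel. Dc x * \<psi> x)" by simp
    have "(\<integral>x. F x * \<psi> x \<partial>lborel) = (\<integral>x. indicator ?S x *\<^sub>R (g x * \<psi> x) - indicator ?S x *\<^sub>R (Dc x * \<psi> x) \<partial>lborel)"
      by (rule Bochner_Integration.integral_cong) (auto simp: F_def algebra_simps)
    also have "\<dots> = (LINT x:?S|lborel. g x * \<psi> x) - (LINT x:?S|lborel. Dc x * \<psi> x)"
      using i1 i2 unfolding set_integrable_def set_lebesgue_integral_def by (rule Bochner_Integration.integral_diff)
    finally show ?thesis using eq by simp
  qed
  have "AE x in lborel. F x = 0"
    by (rule ae_zero[OF Fi orth]) (auto simp: F_def)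
  then have ae: "AE x in lborel. indicator ?S x *\<^sub>R g x = indicator ?S x *\<^sub>R Dc x"
    by eventually_elim (simp add: F_def)
  show ?thesis
  proof (rule that[OF cD dD])
    fix \<psi> assume t: "test_fun \<psi>"
    obtain \<psi>' a b where X: "\<And>x. (\<psi> has_real_derivative \<psi>' x) (at x)" "test_fun \<psi>'"
      "0 < a" "a \<le> b" "b < 1" "\<And>x. x \<notin> {a..b} \<Longrightarrow> \<psi> x = 0" "\<And>x. x \<notin> {a..b} \<Longrightarrow> \<psi>' x = 0"
      "continuous_on UNIV \<psi>" "continuous_on UNIV \<psi>'" "deriv \<psi> = \<psi>'"
      using test_fun_deriv[OF t] by blast
    have [measurable]: "\<psi> \<in> borel_measurable lborel" "\<psi>' \<in> borel_measurable lborel"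
      using borel_measurable_continuous_onI[OF X(8)] borel_measurable_continuous_onI[OF X(9)] by simp_all
    let ?Ig = "\<lambda>x. \<epsilon> / 2 * g x * \<psi>' x - ((2 * \<rho>c x - 1) * g x + \<Omega>A * (1 - \<rho>c x) - \<Omega>D * \<rho>c x) * \<psi> x"
    let ?ID = "\<lambda>x. \<epsilon> / 2 * Dc x * \<psi>' x - ((2 * \<rho>c x - 1) * Dc x + \<Omega>A * (1 - \<rho>c x) - \<Omega>D * \<rho>c x) * \<psi> x"
    have "(LINT x:?S|lborel. \<epsilon> / 2 * g x * deriv \<psi> x
              - ((2 * \<rho> x - 1) * g x + \<Omega>A * (1 - \<rho> x) - \<Omega>D * \<rho> x) * \<psi> x) = 0"
      by (rule E[OF test_W12_0[OF t]])
    also have "(LINT x:?S|lborel. \<epsilon> / 2 * g x * deriv \<psi> x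
              - ((2 * \<rho> x - 1) * g x + \<Omega>A * (1 - \<rho> x) - \<Omega>D * \<rho> x) * \<psi> x) = (LINT x:?S|lborel. ?Ig x)"
      by (rule set_lebesgue_integral_cong) (auto simp: \<rho>c_eq X(10))
    also have "(LINT x:?S|lborel. ?Ig x) = (LINT x:?S|lborel. ?ID x)"
      unfolding set_lebesgue_integral_def
    proof (rule integral_cong_AE)
      have "(\<lambda>x. indicator ?S x *\<^sub>R ?Ig x) = (\<lambda>x. (indicator ?S x *\<^sub>R g x) * (\<epsilon> / 2 * \<psi>' x - (2 * \<rho>c x - 1) * \<psi> x)
          - indicator ?S x * ((\<Omega>A * (1 - \<rho>c x) - \<Omega>D * \<rho>c x) * \<psi> x))"
        by (auto simp: fun_eq_iff algebra_simps)
      also have "\<dots> \<in> borel_measurable lborel" by measurable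
      finally show "(\<lambda>x. indicator ?S x *\<^sub>R ?Ig x) \<in> borel_measurable lborel" .
      show "(\<lambda>x. indicator ?S x *\<^sub>R ?ID x) \<in> borel_measurable lborel" by measurable
      show "AE x in lborel. indicator ?S x *\<^sub>R ?Ig x = indicator ?S x *\<^sub>R ?ID x"
        using ae by eventually_elim (auto simp: indicator_def)
    qed
    also have "(LINT x:?S|lborel. ?ID x) = (LINT x:?S|lborel. \<epsilon> / 2 * D x * deriv \<psi> x
              - ((2 * \<rho> x - 1) * D x + \<Omega>A * (1 - \<rho> x) - \<Omega>D * \<rho> x) * \<psi> x)"
      by (rule set_lebesgue_integral_cong) (auto simp: \<rho>c_eq Dc_eq X(10))
    also have "\<dots> = integral {0..1} (\<lambda>x. \<epsilon> / 2 * D x * deriv \<psi> x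
              - ((2 * \<rho> x - 1) * D x + \<Omega>A * (1 - \<rho> x) - \<Omega>D * \<rho> x) * \<psi> x)"
      unfolding X(10)
      by (rule LINT_cont(2)) (intro continuous_intros cD c\<rho> continuous_on_subset[OF X(8)] continuous_on_subset[OF X(9)]; simp)
    finally show "integral {0..1} (\<lambda>x. \<epsilon> / 2 * D x * deriv \<psi> x
              - ((2 * \<rho> x - 1) * D x + \<Omega>A * (1 - \<rho> x) - \<Omega>D * \<rho> x) * \<psi> x) = 0" by simp
  qed
qed




lemma comb:
  fixes \<rho>1 \<rho>2 D1 D2 :: "real \<Rightarrow> real"
  assumes cD1: "continuous_on {0..1} D1" and dD1: "\<And>x. x \<in> {0..1} \<Longrightarrow> (\<rho>1 has_real_derivative D1 x) (at x within {0..1})"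
    and E1: "integral {0..1} (\<lambda>x. \<epsilon> / 2 * D1 x * deriv \<psi> x
              - ((2 * \<rho>1 x - 1) * D1 x + \<Omega>A * (1 - \<rho>1 x) - \<Omega>D * \<rho>1 x) * \<psi> x) = 0"
    and cD2: "continuous_on {0..1} D2" and dD2: "\<And>x. x \<in> {0..1} \<Longrightarrow> (\<rho>2 has_real_derivative D2 x) (at x within {0..1})"
    and E2: "integral {0..1} (\<lambda>x. \<epsilon> / 2 * D2 x * deriv \<psi> x
              - ((2 * \<rho>2 x - 1) * D2 x + \<Omega>A * (1 - \<rho>2 x) - \<Omega>D * \<rho>2 x) * \<psi> x) = 0"
    and t: "test_fun \<psi>"
  shows "integral {0..1} (\<lambda>x. (\<epsilon> / 2 * (D1 x - D2 x) + (\<rho>1 x + \<rho>2 x - 1) * (\<rho>1 x - \<rho>2 x)) * deriv \<psi> x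
            + (\<Omega>A + \<Omega>D) * (\<rho>1 x - \<rho>2 x) * \<psi> x) = 0"
proof -
  obtain \<psi>' a b where X: "\<And>x. (\<psi> has_real_derivative \<psi>' x) (at x)" "test_fun \<psi>'"
    "0 < a" "a \<le> b" "b < 1" "\<And>x. x \<notin> {a..b} \<Longrightarrow> \<psi> x = 0" "\<And>x. x \<notin> {a..b} \<Longrightarrow> \<psi>' x = 0"
    "continuous_on UNIV \<psi>" "continuous_on UNIV \<psi>'" "deriv \<psi> = \<psi>'"
    using test_fun_deriv[OF t] by blast
  have c1: "continuous_on {0..1} \<rho>1" by (rule DERIV_continuous_on[OF dD1])
  have c2: "continuous_on {0..1} \<rho>2" by (rule DERIV_continuous_on[OF dD2])
  have c\<psi>: "continuous_on {0..1} \<psi>" "continuous_on {0..1} \<psi>'"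
    using X(8,9) continuous_on_subset by blast+
  let ?A1 = "\<lambda>x. \<epsilon> / 2 * D1 x * \<psi>' x - ((2 * \<rho>1 x - 1) * D1 x + \<Omega>A * (1 - \<rho>1 x) - \<Omega>D * \<rho>1 x) * \<psi> x"
  let ?A2 = "\<lambda>x. \<epsilon> / 2 * D2 x * \<psi>' x - ((2 * \<rho>2 x - 1) * D2 x + \<Omega>A * (1 - \<rho>2 x) - \<Omega>D * \<rho>2 x) * \<psi> x"
  let ?u = "\<lambda>x. (\<rho>1 x + \<rho>2 x - 1) * (\<rho>1 x - \<rho>2 x)"
  let ?u' = "\<lambda>x. (D1 x + D2 x) * (\<rho>1 x - \<rho>2 x) + (\<rho>1 x + \<rho>2 x - 1) * (D1 x - D2 x)"
  have du: "(?u has_real_derivative ?u' x) (at x within {0..1})" if "x \<in> {0..1}" for x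
    using dD1[OF that] dD2[OF that] by (auto intro!: derivative_eq_intros)
  have ibp: "integral {0..1} (\<lambda>x. ?u x * \<psi>' x) = - integral {0..1} (\<lambda>x. ?u' x * \<psi> x)"
  proof (rule ibp01[OF du _ _ c\<psi>(2)])
    show "(\<psi> has_real_derivative \<psi>' x) (at x within {0..1})" for x using X(1) has_field_derivative_at_within by blast
    show "continuous_on {0..1} ?u'" by (intro continuous_intros cD1 cD2 c1 c2)
    show "?u 0 * \<psi> 0 = 0" "?u 1 * \<psi> 1 = 0" using X(3,5,6) by auto
  qed (simp_all)
  have i: "f integrable_on {0..1}" if "continuous_on {0..1} f" for f :: "real \<Rightarrow> real"
    by (rule integrable_continuous_real[OF that])
  have iA1: "?A1 integrable_on {0..1}" by (intro i continuous_intros cD1 c1 c\<psi>)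
  have iA2: "?A2 integrable_on {0..1}" by (intro i continuous_intros cD2 c2 c\<psi>)
  have iu: "(\<lambda>x. ?u x * \<psi>' x) integrable_on {0..1}" by (intro i continuous_intros c1 c2 c\<psi>)
  have iu': "(\<lambda>x. ?u' x * \<psi> x) integrable_on {0..1}" by (intro i continuous_intros cD1 cD2 c1 c2 c\<psi>)
  have "integral {0..1} (\<lambda>x. (?A1 x - ?A2 x) + ?u x * \<psi>' x + ?u' x * \<psi> x) =
        integral {0..1} ?A1 - integral {0..1} ?A2 + integral {0..1} (\<lambda>x. ?u x * \<psi>' x) + integral {0..1} (\<lambda>x. ?u' x * \<psi> x)"
    using iA1 iA2 iu iu' by (simp add: integral_add integral_diff integrable_add integrable_diff)
  also have "\<dots> = 0" using E1 E2 ibp unfolding X(10) by simp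
  finally have "integral {0..1} (\<lambda>x. (?A1 x - ?A2 x) + ?u x * \<psi>' x + ?u' x * \<psi> x) = 0" .
  moreover have "(\<lambda>x. (?A1 x - ?A2 x) + ?u x * \<psi>' x + ?u' x * \<psi> x) =
     (\<lambda>x. (\<epsilon> / 2 * (D1 x - D2 x) + (\<rho>1 x + \<rho>2 x - 1) * (\<rho>1 x - \<rho>2 x)) * deriv \<psi> x
            + (\<Omega>A + \<Omega>D) * (\<rho>1 x - \<rho>2 x) * \<psi> x)"
    unfolding X(10) by (auto simp: fun_eq_iff field_simps)
  ultimately show ?thesis by simp
qed


lemma deriv_sign_left:
  fixes w :: "real \<Rightarrow> real"
  assumes dw: "(w has_real_derivative L) (at c within {0..1})" and cd: "c < d" "0 \<le> c" "d \<le> 1"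
    and wc: "w c = 0" and pos: "\<And>y. c < y \<Longrightarrow> y < d \<Longrightarrow> 0 < w y"
  shows "0 \<le> L"
proof -
  have "((\<lambda>y. (w y - w c) / (y - c)) \<longlongrightarrow> L) (at c within {0..1})"
    using dw by (simp add: has_field_derivative_iff)
  then have lim: "((\<lambda>y. (w y - w c) / (y - c)) \<longlongrightarrow> L) (at c within {c<..<d})"
    by (rule tendsto_within_subset) (use cd in auto)
  have ev: "eventually (\<lambda>y. 0 \<le> (w y - w c) / (y - c)) (at c within {c<..<d})"
    unfolding eventually_at_filter
  proof (rule always_eventually, intro allI impI)
    fix y assume "y \<noteq> c" "y \<in> {c<..<d}"
    then have "0 < w y" "0 < y - c" using pos by auto
    then show "0 \<le> (w y - w c) / (y - c)" by (simp add: wc)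
  qed
  have nb: "\<not> trivial_limit (at c within {c<..<d})"
    using cd by (simp add: at_within_eq_bot_iff)
  show ?thesis by (rule tendsto_lowerbound[OF lim ev nb])
qed

lemma deriv_sign_right:
  fixes w :: "real \<Rightarrow> real"
  assumes dw: "(w has_real_derivative L) (at d within {0..1})" and cd: "c < d" "0 \<le> c" "d \<le> 1"
    and wd: "w d = 0" and pos: "\<And>y. c < y \<Longrightarrow> y < d \<Longrightarrow> 0 < w y"
  shows "L \<le> 0"
proof -
  have "((\<lambda>y. (w y - w d) / (y - d)) \<longlongrightarrow> L) (at d within {0..1})"
    using dw by (simp add: has_field_derivative_iff)
  then have lim: "((\<lambda>y. (w y - w d) / (y - d)) \<longlongrightarrow> L) (at d within {c<..<d})"
    by (rule tendsto_within_subset) (use cd in auto)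
  have ev: "eventually (\<lambda>y. (w y - w d) / (y - d) \<le> 0) (at d within {c<..<d})"
    unfolding eventually_at_filter
  proof (rule always_eventually, intro allI impI)
    fix y assume "y \<noteq> d" "y \<in> {c<..<d}"
    then have "0 < w y" "y - d < 0" using pos by auto
    then show "(w y - w d) / (y - d) \<le> 0" by (simp add: wd divide_pos_neg less_imp_le)
  qed
  have nb: "\<not> trivial_limit (at d within {c<..<d})"
    using cd by (simp add: at_within_eq_bot_iff)
  show ?thesis by (rule tendsto_upperbound[OF lim ev nb])
qed

lemma int_restrict:
  fixes f :: "real \<Rightarrow> real"
  assumes cf: "continuous_on {0..1} f" and pq: "0 \<le> p" "p \<le> q" "q \<le> 1"
    and z: "\<And>x. x \<in> {0..1} \<Longrightarrow> x \<le> p \<or> q \<le> x \<Longrightarrow> f x = 0"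
  shows "integral {0..1} f = integral {p..q} f"
proof -
  have i: "f integrable_on {0..1}" by (rule integrable_continuous_real[OF cf])
  have i2: "f integrable_on {p..1}" by (rule integrable_continuous_real) (rule continuous_on_subset[OF cf], use pq in auto)
  have "integral {0..p} f + integral {p..1} f = integral {0..1} f"
    by (rule Henstock_Kurzweil_Integration.integral_combine[OF pq(1) _ i]) (use pq in auto)
  moreover have "integral {p..q} f + integral {q..1} f = integral {p..1} f"
    by (rule Henstock_Kurzweil_Integration.integral_combine[OF pq(2,3) i2])
  moreover have "integral {0..p} f = integral {0..p} (\<lambda>_. 0)"
    by (rule integral_cong) (use z pq in auto)
  moreover have "integral {q..1} f = integral {q..1} (\<lambda>_. 0)"
    by (rule integral_cong) (use z pq in auto)
  ultimately show ?thesis by simp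
qed

lemma int_pos:
  fixes f :: "real \<Rightarrow> real"
  assumes pq: "p < q" and cf: "continuous_on {p..q} f" and nn: "\<And>x. x \<in> {p..q} \<Longrightarrow> 0 \<le> f x"
    and pos: "0 < f ((p+q)/2)"
  shows "0 < integral {p..q} f"
proof -
  have int: "f integrable_on {p..q}" by (rule integrable_continuous_real[OF cf])
  have ge: "0 \<le> integral {p..q} f" by (rule integral_nonneg[OF int]) (simp add: nn)
  have "integral {p..q} f \<noteq> 0"
  proof
    assume "integral {p..q} f = 0"
    then have "\<forall>x\<in>cbox p q. f x = 0"
      using integral_cbox_eq_0_iff[of p q f] pq cf nn by auto
    moreover have "(p+q)/2 \<in> cbox p q" using pq by auto
    ultimately show False using pos by auto
  qed
  with ge show ?thesis by simp
qed


lemma one_side: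
  assumes eps: "\<epsilon> > 0" and OA: "\<Omega>A > 0" and OD: "\<Omega>D > 0"
    and ws1: "weak_solution_S \<epsilon> \<Omega>A \<Omega>D \<alpha> \<beta> \<rho>1" and C11: "C1_01 \<rho>1"
    and ws2: "weak_solution_S \<epsilon> \<Omega>A \<Omega>D \<alpha> \<beta> \<rho>2" and C12: "C1_01 \<rho>2"
  shows "\<forall>x\<in>{0..1}. \<rho>1 x \<le> \<rho>2 x"
proof (rule ccontr)
  assume "\<not> (\<forall>x\<in>{0..1}. \<rho>1 x \<le> \<rho>2 x)"
  then obtain x0 where x0: "x0 \<in> {0..1}" "\<rho>2 x0 < \<rho>1 x0" by auto
  obtain D1 where cD1: "continuous_on {0..1} D1" and dD1: "\<And>x. x \<in> {0..1} \<Longrightarrow> (\<rho>1 has_real_derivative D1 x) (at x within {0..1})"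
    and E1: "\<And>\<psi>. test_fun \<psi> \<Longrightarrow> integral {0..1} (\<lambda>x. \<epsilon> / 2 * D1 x * deriv \<psi> x
              - ((2 * \<rho>1 x - 1) * D1 x + \<Omega>A * (1 - \<rho>1 x) - \<Omega>D * \<rho>1 x) * \<psi> x) = 0"
    using ws_test[OF ws1 C11] by blast
  obtain D2 where cD2: "continuous_on {0..1} D2" and dD2: "\<And>x. x \<in> {0..1} \<Longrightarrow> (\<rho>2 has_real_derivative D2 x) (at x within {0..1})"
    and E2: "\<And>\<psi>. test_fun \<psi> \<Longrightarrow> integral {0..1} (\<lambda>x. \<epsilon> / 2 * D2 x * deriv \<psi> x
              - ((2 * \<rho>2 x - 1) * D2 x + \<Omega>A * (1 - \<rho>2 x) - \<Omega>D * \<rho>2 x) * \<psi> x) = 0"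
    using ws_test[OF ws2 C12] by blast
  define w where "w x = \<rho>1 x - \<rho>2 x" for x
  define V where "V x = \<epsilon> / 2 * (D1 x - D2 x) + (\<rho>1 x + \<rho>2 x - 1) * (\<rho>1 x - \<rho>2 x)" for x
  define Om where "Om = \<Omega>A + \<Omega>D"
  have Om: "0 < Om" using OA OD by (simp add: Om_def)
  have key: "integral {0..1} (\<lambda>x. V x * deriv \<psi> x + Om * w x * \<psi> x) = 0" if t: "test_fun \<psi>" for \<psi>
    using comb[OF cD1 dD1 E1[OF t] cD2 dD2 E2[OF t] t] by (simp add: V_def w_def Om_def)
  have c1: "continuous_on {0..1} \<rho>1" by (rule DERIV_continuous_on[OF dD1])
  have c2: "continuous_on {0..1} \<rho>2" by (rule DERIV_continuous_on[OF dD2])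
  have cw: "continuous_on {0..1} w" unfolding w_def by (intro continuous_intros c1 c2)
  have cV: "continuous_on {0..1} V" unfolding V_def by (intro continuous_intros c1 c2 cD1 cD2)
  have dw: "(w has_real_derivative (D1 x - D2 x)) (at x within {0..1})" if "x \<in> {0..1}" for x
    unfolding w_def[abs_def] using dD1[OF that] dD2[OF that] by (rule DERIV_diff)
  have w0: "w 0 = 0" "w 1 = 0" using ws1 ws2 unfolding weak_solution_S_def w_def by auto
  have wx0: "0 < w x0" using x0 by (simp add: w_def)
  have x0': "0 < x0" "x0 < 1" using x0 wx0 w0 by (auto simp: less_le)
  define Z1 where "Z1 = {0..x0} \<inter> w -` {0}"
  have Z1c: "closed Z1" unfolding Z1_def
    by (rule continuous_closed_preimage) (use x0 in \<open>auto intro: continuous_on_subset[OF cw]\<close>)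
  have Z1ne: "0 \<in> Z1" using w0 x0' by (simp add: Z1_def)
  have Z1b: "bdd_above Z1" unfolding Z1_def by (auto intro: bdd_aboveI[of _ x0])
  define c where "c = Sup Z1"
  have cZ: "c \<in> Z1" unfolding c_def using closed_contains_Sup[OF _ Z1b Z1c] Z1ne by blast
  have wc: "w c = 0" "0 \<le> c" "c \<le> x0" using cZ by (auto simp: Z1_def)
  have posl: "0 < w y" if yy: "c < y" "y \<le> x0" for y
  proof (rule ccontr)
    assume "\<not> 0 < w y"
    then have "w y \<le> 0" by simp
    moreover have "continuous_on {y..x0} w" by (rule continuous_on_subset[OF cw]) (use yy wc x0 in auto)
    ultimately obtain z where z: "y \<le> z" "z \<le> x0" "w z = 0"
      using IVT'[of w y 0 x0] wx0 yy by auto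
    then have "z \<in> Z1" using yy wc by (auto simp: Z1_def)
    then have "z \<le> c" unfolding c_def by (rule cSup_upper[OF _ Z1b])
    then show False using z yy by simp
  qed
  have cx0: "c < x0" using wc wx0 by (auto simp: less_le)
  define Z2 where "Z2 = {x0..1} \<inter> w -` {0}"
  have Z2c: "closed Z2" unfolding Z2_def
    by (rule continuous_closed_preimage) (use x0 in \<open>auto intro: continuous_on_subset[OF cw]\<close>)
  have Z2ne: "1 \<in> Z2" using w0 x0' by (simp add: Z2_def)
  have Z2b: "bdd_below Z2" unfolding Z2_def by (auto intro: bdd_belowI[of _ x0])
  define d where "d = Inf Z2"
  have dZ: "d \<in> Z2" unfolding d_def using closed_contains_Inf[OF _ Z2b Z2c] Z2ne by blast
  have wd: "w d = 0" "x0 \<le> d" "d \<le> 1" using dZ by (auto simp: Z2_def)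
  have posr: "0 < w y" if yy: "x0 \<le> y" "y < d" for y
  proof (rule ccontr)
    assume "\<not> 0 < w y"
    then have "w y \<le> 0" by simp
    moreover have "continuous_on {x0..y} w" by (rule continuous_on_subset[OF cw]) (use yy wd x0 in auto)
    ultimately obtain z where z: "x0 \<le> z" "z \<le> y" "w z = 0"
      using IVT2'[of w y 0 x0] wx0 yy by auto
    then have "z \<in> Z2" using yy wd by (auto simp: Z2_def)
    then have "d \<le> z" unfolding d_def by (rule cInf_lower[OF _ Z2b])
    then show False using z yy by simp
  qed
  have x0d: "x0 < d" using wd wx0 by (auto simp: less_le)
  have pos: "0 < w y" if "c < y" "y < d" for y
    using posl posr that by (cases "y \<le> x0") auto
  have cd: "c < d" using cx0 x0d by simp
  have Vc: "0 \<le> V c"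
  proof -
    have "0 \<le> D1 c - D2 c"
      by (rule deriv_sign_left[OF dw cd wc(2) wd(3) wc(1) pos]) (use wc x0 in auto)
    then show ?thesis using eps wc(1) by (simp add: V_def w_def)
  qed
  have Vd: "V d \<le> 0"
  proof -
    have "D1 d - D2 d \<le> 0"
      by (rule deriv_sign_right[OF dw cd wc(2) wd(3) wd(1) pos]) (use wd x0 wc in auto)
    then show ?thesis using eps wd(1) by (simp add: V_def w_def mult_nonneg_nonpos)
  qed
  define c' where "c' = c + (d - c) / 4"
  define d' where "d' = d - (d - c) / 4"
  have cd': "c < c'" "c' < d'" "d' < d" using cd by (auto simp: c'_def d'_def field_simps)
  define m where "m = Om * integral {c'..d'} w"
  have mpos: "0 < m"
  proof -
    have "0 < integral {c'..d'} w"
      by (rule int_pos) (use cd' wc wd pos in \<open>auto intro: continuous_on_subset[OF cw] less_imp_le\<close>)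
    then show ?thesis using Om by (simp add: m_def)
  qed
  define \<eta> where "\<eta> = m / 4"
  have eta: "0 < \<eta>" using mpos by (simp add: \<eta>_def)
  obtain \<delta>c where dc: "\<delta>c > 0" "\<And>y. y \<in> {0..1} \<Longrightarrow> dist y c < \<delta>c \<Longrightarrow> dist (V y) (V c) < \<eta>"
    using cV eta wc x0 unfolding continuous_on_iff by (metis atLeastAtMost_iff order_trans)
  obtain \<delta>d where dd: "\<delta>d > 0" "\<And>y. y \<in> {0..1} \<Longrightarrow> dist y d < \<delta>d \<Longrightarrow> dist (V y) (V d) < \<eta>"
    using cV eta wd x0 unfolding continuous_on_iff by (metis atLeastAtMost_iff order_trans)
  define h where "h = min (min \<delta>c \<delta>d) ((d - c) / 4) / 2"
  have hm: "min (min \<delta>c \<delta>d) ((d - c) / 4) \<le> (d - c) / 4" "min (min \<delta>c \<delta>d) ((d - c) / 4) \<le> \<delta>c"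
    "min (min \<delta>c \<delta>d) ((d - c) / 4) \<le> \<delta>d" "0 < min (min \<delta>c \<delta>d) ((d - c) / 4)"
    using dc(1) dd(1) cd by (simp_all only: min.cobounded2 min.coboundedI1 min.cobounded1 min.cobounded2) auto
  have h: "0 < h" "h < \<delta>c" "h < \<delta>d" "h \<le> (d - c) / 8" using hm unfolding h_def by linarith+
  define p where "p = c + h / 2"
  define q where "q = c + h"
  define r where "r = d - h"
  define s where "s = d - h / 2"
  have pq: "p < q" "q \<le> r" "r < s" "0 < p" "s < 1" "q \<le> c'" "d' \<le> r" "c < p" "s < d"
    using h cd wc wd x0' unfolding p_def q_def r_def s_def c'_def d'_def by auto
  define \<psi> where "\<psi> = tf p q r s"
  have t: "test_fun \<psi>" unfolding \<psi>_def by (rule tf_test) (use pq in auto)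
  have d\<psi>: "deriv \<psi> = tfd p q r s" unfolding \<psi>_def by (rule tf_deriv_eq) (use pq in auto)
  have crd1: "continuous_on S (rampd p q)" for S by (rule smooth_cont_on[OF smooth_rampd])
  have crd2: "continuous_on S (rampd r s)" for S by (rule smooth_cont_on[OF smooth_rampd])
  have c\<psi>: "continuous_on S \<psi>" for S unfolding \<psi>_def by (rule tf_cont) (use pq in auto)
  have i: "f integrable_on {0..1}" if "continuous_on {0..1} f" for f :: "real \<Rightarrow> real"
    by (rule integrable_continuous_real[OF that])
  let ?I1 = "integral {0..1} (\<lambda>x. V x * rampd p q x)"
  let ?I2 = "integral {0..1} (\<lambda>x. V x * rampd r s x)"
  let ?I3 = "integral {0..1} (\<lambda>x. Om * w x * \<psi> x)"
  have split: "integral {0..1} (\<lambda>x. V x * deriv \<psi> x + Om * w x * \<psi> x) = ?I1 - ?I2 + ?I3"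
  proof -
    have "(\<lambda>x. V x * deriv \<psi> x + Om * w x * \<psi> x) = (\<lambda>x. (V x * rampd p q x - V x * rampd r s x) + Om * w x * \<psi> x)"
      by (simp add: d\<psi> tfd_def fun_eq_iff algebra_simps)
    moreover have "integral {0..1} (\<lambda>x. (V x * rampd p q x - V x * rampd r s x) + Om * w x * \<psi> x) = ?I1 - ?I2 + ?I3"
      by (simp add: integral_add integral_diff i continuous_intros cV crd1 crd2 cw c\<psi> integrable_diff)
    ultimately show ?thesis by simp
  qed
  have I1: "V c - \<eta> \<le> ?I1"
  proof -
    have "?I1 = integral {p..q} (\<lambda>x. V x * rampd p q x)"
      by (rule int_restrict) (use pq wc in \<open>auto intro: continuous_intros cV crd1 simp: rampd_zero\<close>)
    moreover have "integral {p..q} (\<lambda>x. (V c - \<eta>) * rampd p q x) \<le> integral {p..q} (\<lambda>x. V x * rampd p q x)"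
    proof (rule integral_le)
      show "(\<lambda>x. (V c - \<eta>) * rampd p q x) integrable_on {p..q}"
        by (rule integrable_continuous_real) (intro continuous_intros crd1)
      show "(\<lambda>x. V x * rampd p q x) integrable_on {p..q}"
        by (rule integrable_continuous_real) (intro continuous_intros crd1 continuous_on_subset[OF cV]; use pq wc wd in auto)
      fix x assume x: "x \<in> {p..q}"
      then have "x \<in> {0..1}" "dist x c < \<delta>c" using pq wc wd h by (auto simp: dist_real_def p_def q_def)
      then have "V c - \<eta> \<le> V x" using dc(2) by (force simp: dist_real_def)
      then show "(V c - \<eta>) * rampd p q x \<le> V x * rampd p q x"
        using rampd_nonneg[OF pq(1)] by (simp add: mult_right_mono)
    qed
    moreover have "integral {p..q} (\<lambda>x. (V c - \<eta>) * rampd p q x) = V c - \<eta>"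
    proof -
      have "integral {p..q} (\<lambda>x. (V c - \<eta>) * rampd p q x) = (V c - \<eta>) * integral {p..q} (rampd p q)"
        by (rule integral_mult[symmetric]) (rule integrable_continuous_real[OF crd1])
      then show ?thesis by (simp add: integral_rampd[OF pq(1)])
    qed
    ultimately show ?thesis by linarith
  qed
  have I2: "?I2 \<le> V d + \<eta>"
  proof -
    have "?I2 = integral {r..s} (\<lambda>x. V x * rampd r s x)"
      by (rule int_restrict) (use pq wd h cd in \<open>auto intro: continuous_intros cV crd2 simp: rampd_zero\<close>)
    moreover have "integral {r..s} (\<lambda>x. V x * rampd r s x) \<le> integral {r..s} (\<lambda>x. (V d + \<eta>) * rampd r s x)"
    proof (rule integral_le)
      show "(\<lambda>x. (V d + \<eta>) * rampd r s x) integrable_on {r..s}"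
        by (rule integrable_continuous_real) (intro continuous_intros crd2)
      show "(\<lambda>x. V x * rampd r s x) integrable_on {r..s}"
        by (rule integrable_continuous_real) (intro continuous_intros crd2 continuous_on_subset[OF cV]; use pq wc wd h cd in \<open>auto simp: r_def\<close>)
      fix x assume x: "x \<in> {r..s}"
      then have "x \<in> {0..1}" "dist x d < \<delta>d" using pq wc wd h cd by (auto simp: dist_real_def r_def s_def)
      then have "V x \<le> V d + \<eta>" using dd(2) by (force simp: dist_real_def)
      then show "V x * rampd r s x \<le> (V d + \<eta>) * rampd r s x"
        using rampd_nonneg[OF pq(3)] by (simp add: mult_right_mono)
    qed
    moreover have "integral {r..s} (\<lambda>x. (V d + \<eta>) * rampd r s x) = V d + \<eta>"
    proof -
      have "integral {r..s} (\<lambda>x. (V d + \<eta>) * rampd r s x) = (V d + \<eta>) * integral {r..s} (rampd r s)"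
        by (rule integral_mult[symmetric]) (rule integrable_continuous_real[OF crd2])
      then show ?thesis by (simp add: integral_rampd[OF pq(3)])
    qed
    ultimately show ?thesis by linarith
  qed
  have I3: "m \<le> ?I3"
  proof -
    have nn: "0 \<le> Om * w x * \<psi> x" for x
    proof (cases "c < x \<and> x < d")
      case True
      then show ?thesis using pos[of x] Om tf_bounds[OF pq(1,2,3), of x] by (simp add: \<psi>_def)
    next
      case False
      then have "\<psi> x = 0" unfolding \<psi>_def by (intro tf_zero[OF pq(1,2,3)]) (use pq in auto)
      then show ?thesis by simp
    qed
    have "integral {c'..d'} (\<lambda>x. Om * w x * \<psi> x) \<le> ?I3"
      by (rule integral_subset_le) (use cd' wc wd nn in \<open>auto intro!: integrable_continuous_real continuous_intros continuous_on_subset[OF cw] c\<psi>\<close>)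
    moreover have "integral {c'..d'} (\<lambda>x. Om * w x * \<psi> x) = integral {c'..d'} (\<lambda>x. Om * w x)"
      by (rule integral_cong) (use pq in \<open>auto simp: \<psi>_def tf_one\<close>)
    moreover have "integral {c'..d'} (\<lambda>x. Om * w x) = m"
      unfolding m_def by (rule integral_mult[symmetric]) (rule integrable_continuous_real, rule continuous_on_subset[OF cw], use cd' wc wd in auto)
    ultimately show ?thesis by simp
  qed
  have "0 = ?I1 - ?I2 + ?I3" using key[OF t] split by simp
  moreover have "?I1 - ?I2 + ?I3 \<ge> m / 2" using I1 I2 I3 Vc Vd by (simp add: \<eta>_def)
  ultimately show False using mpos by simp
qed



theorem mainTheorem7:
  fixes \<epsilon> \<Omega>A \<Omega>D \<alpha> \<beta> :: real and \<rho>1 \<rho>2 :: "real \<Rightarrow> real"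
  assumes "\<epsilon> > 0" and "\<Omega>A > 0" and "\<Omega>D > 0"
    and "weak_solution_S \<epsilon> \<Omega>A \<Omega>D \<alpha> \<beta> \<rho>1" and "C1_01 \<rho>1"
    and "weak_solution_S \<epsilon> \<Omega>A \<Omega>D \<alpha> \<beta> \<rho>2" and "C1_01 \<rho>2"
  shows "\<forall>x\<in>{0..1}. \<rho>1 x = \<rho>2 x"
proof -
  have "\<forall>x\<in>{0..1}. \<rho>1 x \<le> \<rho>2 x" by (rule one_side[OF assms])
  moreover have "\<forall>x\<in>{0..1}. \<rho>2 x \<le> \<rho>1 x" by (rule one_side[OF assms(1-3) assms(6,7) assms(4,5)])
  ultimately show ?thesis by (auto intro: order_antisym)
qed

end
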